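(* Let $G$ and $H$ be finite simple graphs. If $G$ or $H$ is a cover graph, then the direct product $G \times H$ is a cover graph.
   Context: A graph is a cover graph if it is the underlying (undirected) graph of the Hasse diagram of some finite partially ordered set. The direct product $G \times H$ has vertex set $V(G)\times V(H)$, with $(g_i,h_s)$ adjacent to $(g_j,h_t)$ if and only if $g_ig_j \in E(G)$ and $h_sh_t \in E(H)$. *)

theory Defs
  imports Main
begin

definition finite_simple_graph :: "'a set \<Rightarrow> ('a \<Rightarrow> 'a \<Rightarrow> bool) \<Rightarrow> bool" where
  "finite_simple_graph V E \<longleftrightarrow>
     finite V \<and> (\<forall>x y. E x y \<longrightarrow> x \<in> V \<and> y \<in> V) \<and>
     (\<forall>x y. E x y \<longrightarrow> E y x) \<and> (\<forall>x. \<not> E x x)"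

definition covers :: "'a set \<Rightarrow> 'a rel \<Rightarrow> 'a \<Rightarrow> 'a \<Rightarrow> bool" where
  "covers V r x y \<longleftrightarrow>
     (x, y) \<in> r \<and> x \<noteq> y \<and>
     \<not> (\<exists>z\<in>V. (x, z) \<in> r \<and> (z, y) \<in> r \<and> z \<noteq> x \<and> z \<noteq> y)"

definition cover_graph :: "'a set \<Rightarrow> ('a \<Rightarrow> 'a \<Rightarrow> bool) \<Rightarrow> bool" where
  "cover_graph V E \<longleftrightarrow>
     (\<exists>r. partial_order_on V r \<and>
          (\<forall>x\<in>V. \<forall>y\<in>V. E x y \<longleftrightarrow> (covers V r x y \<or> covers V r y x)))"

definition direct_prod_edges ::
  "('a \<Rightarrow> 'a \<Rightarrow> bool) \<Rightarrow> ('b \<Rightarrow> 'b \<Rightarrow> bool) \<Rightarrow> ('a \<times> 'b) \<Rightarrow> ('a \<times> 'b) \<Rightarrow> bool" where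
  "direct_prod_edges EG EH p q \<longleftrightarrow> EG (fst p) (fst q) \<and> EH (snd p) (snd q)"

end

theory Submission
  imports Defs
begin

lemma abstract_cover:
  fixes V :: "'c set" and E :: "'c \<Rightarrow> 'c \<Rightarrow> bool" and \<pi> :: "'c \<Rightarrow> 'a"
  assumes po: "partial_order_on VG r"
    and cg: "\<forall>x\<in>VG. \<forall>y\<in>VG. EG x y \<longleftrightarrow> (covers VG r x y \<or> covers VG r y x)"
    and Esym: "\<And>p q. E p q \<Longrightarrow> E q p"
    and EV: "\<And>p q. E p q \<Longrightarrow> p \<in> V \<and> q \<in> V"
    and Epi: "\<And>p q. E p q \<Longrightarrow> EG (\<pi> p) (\<pi> q)"
    and piV: "\<And>p. p \<in> V \<Longrightarrow> \<pi> p \<in> VG"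
  shows "cover_graph V E"
proof -
  define S where "S = {(p,q). E p q \<and> covers VG r (\<pi> p) (\<pi> q)}"
  define R where "R = Id_on V \<union> S\<^sup>+"
  have rtrans: "trans r" and rantisym: "antisym r" and rrefl: "refl_on VG r"
    using po unfolding partial_order_on_def preorder_on_def by auto
  have SV: "(p,q) \<in> S \<Longrightarrow> p \<in> V \<and> q \<in> V" for p q using EV unfolding S_def by auto
  have S1: "(p,q) \<in> S\<^sup>+ \<Longrightarrow> p \<in> V \<and> q \<in> V" for p q
    by (induction rule: trancl.induct) (auto dest: SV)
  have strict: "(p,q) \<in> S\<^sup>+ \<Longrightarrow> (\<pi> p, \<pi> q) \<in> r \<and> \<pi> p \<noteq> \<pi> q" for p q
  proof (induction rule: trancl.induct)
    case (r_into_trancl a b) then show ?case unfolding S_def covers_def by auto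
  next
    case (trancl_into_trancl a b c)
    then have ab: "(\<pi> a, \<pi> b) \<in> r" "\<pi> a \<noteq> \<pi> b" and bc: "(\<pi> b, \<pi> c) \<in> r" "\<pi> b \<noteq> \<pi> c"
      unfolding S_def covers_def by auto
    have ac: "(\<pi> a, \<pi> c) \<in> r" using ab bc rtrans by (meson transD)
    moreover have "\<pi> a \<noteq> \<pi> c"
    proof
      assume "\<pi> a = \<pi> c"
      then have "(\<pi> b, \<pi> a) \<in> r" using bc by simp
      then show False using ab rantisym by (meson antisymD)
    qed
    ultimately show ?case by simp
  qed
  have poR: "partial_order_on V R"
    unfolding partial_order_on_def preorder_on_def
  proof (intro conjI)
    show "refl_on V R" unfolding refl_on_def R_def using S1 by auto
    show "R \<subseteq> V \<times> V"
    proof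
      fix x assume "x \<in> R"
      obtain a b where x: "x = (a,b)" by (cases x)
      show "x \<in> V \<times> V"
      proof (cases "(a,b) \<in> S\<^sup>+")
        case True then show ?thesis using S1 x by blast
      next
        case False then have "(a,b) \<in> Id_on V" using \<open>x \<in> R\<close> x unfolding R_def by blast
        then show ?thesis using x by blast
      qed
    qed
    show "trans R" unfolding trans_def R_def
      by (auto intro: trancl_trans)
    show "antisym R" unfolding antisym_def R_def
    proof (intro allI impI)
      fix x y assume "(x, y) \<in> Id_on V \<union> S\<^sup>+" "(y, x) \<in> Id_on V \<union> S\<^sup>+"
      then show "x = y"
      proof (cases "x = y")
        case False
        then have "(x,y) \<in> S\<^sup>+" "(y,x) \<in> S\<^sup>+" using \<open>(x, y) \<in> _\<close> \<open>(y, x) \<in> _\<close> by auto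
        then have "(x,x) \<in> S\<^sup>+" by (rule trancl_trans)
        then show ?thesis using strict by auto
      qed
    qed
  qed
  have nobetween: False if "(p,q) \<in> S" "(p,z) \<in> S\<^sup>+" "(z,q) \<in> S\<^sup>+" for p q z
  proof -
    have c: "covers VG r (\<pi> p) (\<pi> q)" using that(1) unfolding S_def by auto
    have "\<pi> z \<in> VG" using S1[OF that(2)] piV by auto
    moreover have "(\<pi> p, \<pi> z) \<in> r" "\<pi> p \<noteq> \<pi> z" using strict[OF that(2)] by auto
    moreover have "(\<pi> z, \<pi> q) \<in> r" "\<pi> z \<noteq> \<pi> q" using strict[OF that(3)] by auto
    ultimately have "\<exists>w\<in>VG. (\<pi> p, w) \<in> r \<and> (w, \<pi> q) \<in> r \<and> w \<noteq> \<pi> p \<and> w \<noteq> \<pi> q" by metis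
    then show False using c unfolding covers_def by simp
  qed
  have fwd: "covers V R p q" if "(p,q) \<in> S" for p q
  proof -
    have pq: "\<pi> p \<noteq> \<pi> q" using that unfolding S_def covers_def by auto
    have "p \<noteq> q" using pq by auto
    moreover have "(p,q) \<in> R" using that unfolding R_def by auto
    moreover have "\<not> (\<exists>z\<in>V. (p, z) \<in> R \<and> (z, q) \<in> R \<and> z \<noteq> p \<and> z \<noteq> q)"
    proof
      assume "\<exists>z\<in>V. (p, z) \<in> R \<and> (z, q) \<in> R \<and> z \<noteq> p \<and> z \<noteq> q"
      then obtain z where "(p, z) \<in> S\<^sup>+" "(z, q) \<in> S\<^sup>+" unfolding R_def by auto
      then show False using nobetween that by blast
    qed
    ultimately show ?thesis unfolding covers_def by auto
  qed
  have bwd: "E p q" if "covers V R p q" for p q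
  proof -
    have "(p,q) \<in> S\<^sup>+" "p \<noteq> q" and nb: "\<not> (\<exists>z\<in>V. (p, z) \<in> R \<and> (z, q) \<in> R \<and> z \<noteq> p \<and> z \<noteq> q)"
      using that unfolding covers_def R_def by auto
    from \<open>(p,q) \<in> S\<^sup>+\<close> show ?thesis
    proof (cases rule: tranclE)
      case base then show ?thesis unfolding S_def by auto
    next
      case (step z)
      have "z \<in> V" using S1[OF step(1)] by auto
      moreover have "z \<noteq> p" using strict[OF step(1)] by auto
      moreover have "z \<noteq> q" using strict[of z q] step(2) by auto
      moreover have "(p,z) \<in> R" "(z,q) \<in> R" using step unfolding R_def by auto
      ultimately show ?thesis using nb by blast
    qed
  qed
  have "\<forall>x\<in>V. \<forall>y\<in>V. E x y \<longleftrightarrow> (covers V R x y \<or> covers V R y x)"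
  proof (intro ballI iffI)
    fix x y assume xy: "x \<in> V" "y \<in> V" "E x y"
    have "\<pi> x \<in> VG" "\<pi> y \<in> VG" using xy piV by auto
    then have "covers VG r (\<pi> x) (\<pi> y) \<or> covers VG r (\<pi> y) (\<pi> x)" using cg Epi[OF xy(3)] by auto
    then show "covers V R x y \<or> covers V R y x"
      using fwd xy(3) Esym[OF xy(3)] unfolding S_def by auto
  next
    fix x y assume "x \<in> V" "y \<in> V" "covers V R x y \<or> covers V R y x"
    then show "E x y" using bwd Esym by blast
  qed
  then show ?thesis unfolding cover_graph_def using poR by blast
qed

theorem theorem4:
  fixes VG :: "'a set" and EG :: "'a \<Rightarrow> 'a \<Rightarrow> bool"
    and VH :: "'b set" and EH :: "'b \<Rightarrow> 'b \<Rightarrow> bool"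
  assumes "finite_simple_graph VG EG" and "finite_simple_graph VH EH"
    and "cover_graph VG EG \<or> cover_graph VH EH"
  shows "cover_graph (VG \<times> VH) (direct_prod_edges EG EH)"
  using assms(3)
proof
  assume "cover_graph VG EG"
  then obtain r where "partial_order_on VG r"
    "\<forall>x\<in>VG. \<forall>y\<in>VG. EG x y \<longleftrightarrow> (covers VG r x y \<or> covers VG r y x)"
    unfolding cover_graph_def by blast
  then show ?thesis
  proof (rule abstract_cover[where \<pi>=fst])
    have G: "\<forall>x y. EG x y \<longrightarrow> x \<in> VG \<and> y \<in> VG" "\<forall>x y. EG x y \<longrightarrow> EG y x"
      using assms(1) unfolding finite_simple_graph_def by blast+
    have H: "\<forall>x y. EH x y \<longrightarrow> x \<in> VH \<and> y \<in> VH" "\<forall>x y. EH x y \<longrightarrow> EH y x"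
      using assms(2) unfolding finite_simple_graph_def by blast+
    show "direct_prod_edges EG EH q p" if "direct_prod_edges EG EH p q" for p q
      using that G H unfolding direct_prod_edges_def by blast
    show "p \<in> VG \<times> VH \<and> q \<in> VG \<times> VH" if "direct_prod_edges EG EH p q" for p q
      using that G H unfolding direct_prod_edges_def mem_Times_iff by blast
    show "EG (fst p) (fst q)" if "direct_prod_edges EG EH p q" for p q
      using that unfolding direct_prod_edges_def by simp
    show "fst p \<in> VG" if "p \<in> VG \<times> VH" for p
      using that by (simp add: mem_Times_iff)
  qed
next
  assume "cover_graph VH EH"
  then obtain r where "partial_order_on VH r"
    "\<forall>x\<in>VH. \<forall>y\<in>VH. EH x y \<longleftrightarrow> (covers VH r x y \<or> covers VH r y x)"
    unfolding cover_graph_def by blast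
  then show ?thesis
  proof (rule abstract_cover[where \<pi>=snd])
    have G: "\<forall>x y. EG x y \<longrightarrow> x \<in> VG \<and> y \<in> VG" "\<forall>x y. EG x y \<longrightarrow> EG y x"
      using assms(1) unfolding finite_simple_graph_def by blast+
    have H: "\<forall>x y. EH x y \<longrightarrow> x \<in> VH \<and> y \<in> VH" "\<forall>x y. EH x y \<longrightarrow> EH y x"
      using assms(2) unfolding finite_simple_graph_def by blast+
    show "direct_prod_edges EG EH q p" if "direct_prod_edges EG EH p q" for p q
      using that G H unfolding direct_prod_edges_def by blast
    show "p \<in> VG \<times> VH \<and> q \<in> VG \<times> VH" if "direct_prod_edges EG EH p q" for p q
      using that G H unfolding direct_prod_edges_def mem_Times_iff by blast
    show "EH (snd p) (snd q)" if "direct_prod_edges EG EH p q" for p q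
      using that unfolding direct_prod_edges_def by simp
    show "snd p \<in> VH" if "p \<in> VG \<times> VH" for p
      using that by (simp add: mem_Times_iff)
  qed
qed

end
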